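(* Let $\Sigma=\mathbb{S}^{n-1}\times\mathbb{R}\subset\mathbb{R}^{n+1}$ be a self-shrinker, with $x_n$ the coordinate on the $\mathbb{R}$ factor. Then $C=\sqrt2$ is the unique value $C>0$ such that the two hypersurfaces $\{x_n=\pm C\}$ split $\Sigma$ into three stable regions $\{x_n>C\}$, $\{|x_n|<C\}$, $\{x_n<-C\}$.
   Context: $\mathbb{S}^{n-1}$ is the round sphere of radius $\sqrt{2(n-1)}$ centered at the origin of $\mathbb{R}^n$. Stability operator: $Lf=\Delta f-\tfrac12\langle\vec x,\nabla f\rangle+(|A|^2+\tfrac12)f$. A region $\Omega$ is stable if there exists a function $u$ with $Lu=0$ and $u>0$ on $\Omega$. *)

theory Defs
  imports "HOL-Analysis.Analysis"
begin

text \<open>Ambient space R^(n+1) = R^n x R, where n = CARD('n); the last (R) coordinate is x_n.\<close>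

definition shrink_radius :: "nat \<Rightarrow> real" where
  "shrink_radius n = sqrt (2 * (real n - 1))"

definition Sigma_cyl :: "((real^'n) \<times> real) set" where
  "Sigma_cyl = {(y, t). norm y = shrink_radius CARD('n)}"

text \<open>Nearest-point projection onto the cylinder (defined off the axis y = 0).\<close>
definition cyl_proj :: "(real^'n) \<times> real \<Rightarrow> (real^'n) \<times> real" where
  "cyl_proj p = ((shrink_radius CARD('n) / norm (fst p)) *\<^sub>R fst p, snd p)"

definition cyl_sdist :: "(real^'n) \<times> real \<Rightarrow> real" where
  "cyl_sdist p = norm (fst p) - shrink_radius CARD('n)"

definition pd :: "'a::real_normed_vector \<Rightarrow> ('a \<Rightarrow> real) \<Rightarrow> 'a \<Rightarrow> real" where
  "pd b F p = deriv (\<lambda>s. F (p + s *\<^sub>R b)) 0"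

definition eucl_grad :: "('a::euclidean_space \<Rightarrow> real) \<Rightarrow> 'a \<Rightarrow> 'a" where
  "eucl_grad F p = (\<Sum>b\<in>Basis. pd b F p *\<^sub>R b)"

definition eucl_lap :: "('a::euclidean_space \<Rightarrow> real) \<Rightarrow> 'a \<Rightarrow> real" where
  "eucl_lap F p = (\<Sum>b\<in>Basis. pd b (pd b F) p)"

definition C2_on :: "'a::euclidean_space set \<Rightarrow> ('a \<Rightarrow> real) \<Rightarrow> bool" where
  "C2_on U F \<longleftrightarrow> open U \<and>
     (\<exists>g H. (\<forall>x\<in>U. (F has_derivative (\<lambda>h. g x \<bullet> h)) (at x)) \<and>
            (\<forall>x\<in>U. (g has_derivative H x) (at x)) \<and>
            (\<forall>h. continuous_on U (\<lambda>x. H x h)))"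

text \<open>Normal extension of a function on the cylinder: constant along normal lines.
  Laplace-Beltrami operator and surface gradient of u on Sigma are the Euclidean ones of
  this extension, evaluated on Sigma.\<close>
definition cyl_ext :: "((real^'n) \<times> real \<Rightarrow> real) \<Rightarrow> (real^'n) \<times> real \<Rightarrow> real" where
  "cyl_ext u = u \<circ> cyl_proj"

definition cyl_lap :: "((real^'n) \<times> real \<Rightarrow> real) \<Rightarrow> (real^'n) \<times> real \<Rightarrow> real" where
  "cyl_lap u p = eucl_lap (cyl_ext u) p"

definition cyl_grad :: "((real^'n) \<times> real \<Rightarrow> real) \<Rightarrow> (real^'n) \<times> real \<Rightarrow> (real^'n) \<times> real" where
  "cyl_grad u p = eucl_grad (cyl_ext u) p"

text \<open>|A|^2 = squared Frobenius norm of the Hessian of the signed distance, on Sigma.\<close>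
definition cyl_A2 :: "(real^'n) \<times> real \<Rightarrow> real" where
  "cyl_A2 p = (\<Sum>b\<in>Basis. \<Sum>c\<in>Basis. (pd c (pd b cyl_sdist) p)\<^sup>2)"

definition stab_op :: "((real^'n) \<times> real \<Rightarrow> real) \<Rightarrow> (real^'n) \<times> real \<Rightarrow> real" where
  "stab_op u p = cyl_lap u p - (1/2) * (p \<bullet> cyl_grad u p) + (cyl_A2 p + 1/2) * u p"

definition stable_region :: "((real^'n) \<times> real) set \<Rightarrow> bool" where
  "stable_region \<Omega> \<longleftrightarrow>
     (\<exists>u. C2_on {q. fst q \<noteq> 0 \<and> cyl_proj q \<in> \<Omega>} (cyl_ext u) \<and>
          (\<forall>p\<in>\<Omega>. stab_op u p = 0 \<and> u p > 0))"

end

theory Submission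
  imports Defs
begin


lemma sum_Basis_prod_real:
  fixes f :: "('a::euclidean_space \<times> 'b::euclidean_space) \<Rightarrow> real"
  shows "sum f Basis = sum (\<lambda>i. f (i, 0)) Basis + sum (\<lambda>i. f (0, i)) Basis"
proof -
  have "inj_on (\<lambda>u. (u::'a, 0::'b)) Basis" "inj_on (\<lambda>u. (0::'a, u::'b)) Basis"
    by (auto intro!: inj_onI Pair_inject)
  moreover have "(\<lambda>u. (u::'a, 0::'b)) ` Basis \<inter> (\<lambda>u. (0::'a, u::'b)) ` Basis = {}"
    by (auto simp: Basis_prod_def)
  ultimately show ?thesis
    unfolding Basis_prod_def
    by (subst sum.union_disjoint) (auto simp: sum.reindex)
qed

lemma pd_first:
  fixes F :: "'a::euclidean_space \<Rightarrow> real"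
  assumes "\<And>x. x \<in> S \<Longrightarrow> (F has_derivative (\<lambda>h. g x \<bullet> h)) (at x)" "p \<in> S"
  shows "pd b F p = g p \<bullet> b"
proof -
  have 1: "((\<lambda>s. p + s *\<^sub>R b) has_derivative (\<lambda>s. s *\<^sub>R b)) (at 0)"
    by (auto intro!: derivative_eq_intros)
  have 2: "(F has_derivative (\<lambda>h. g p \<bullet> h)) (at (p + 0 *\<^sub>R b))" using assms by simp
  have "((\<lambda>s. F (p + s *\<^sub>R b)) has_derivative (\<lambda>s. g p \<bullet> (s *\<^sub>R b))) (at 0)"
    using has_derivative_compose[OF 1 2] by (simp add: o_def)
  hence "((\<lambda>s. F (p + s *\<^sub>R b)) has_field_derivative (g p \<bullet> b)) (at 0)"
    by (rule has_derivative_imp_has_field_derivative) simp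
  thus ?thesis unfolding pd_def by (rule DERIV_imp_deriv)
qed

lemma pd_second:
  fixes F :: "'a::euclidean_space \<Rightarrow> real"
  assumes "open S" "\<And>x. x \<in> S \<Longrightarrow> (F has_derivative (\<lambda>h. g x \<bullet> h)) (at x)"
    "\<And>x. x \<in> S \<Longrightarrow> (g has_derivative H x) (at x)" "p \<in> S"
  shows "pd c (pd b F) p = H p c \<bullet> b"
proof -
  let ?T = "{s::real. p + s *\<^sub>R c \<in> S}"
  have oT: "open ?T"
  proof -
    have "?T = (\<lambda>s. p + s *\<^sub>R c) -` S" by auto
    thus ?thesis by (auto intro!: open_vimage continuous_intros assms)
  qed
  have 1: "((\<lambda>s. p + s *\<^sub>R c) has_derivative (\<lambda>s. s *\<^sub>R c)) (at 0)"
    by (auto intro!: derivative_eq_intros)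
  have 2: "(g has_derivative H p) (at (p + 0 *\<^sub>R c))" using assms by simp
  have lin: "linear (H p)" using assms(3)[OF assms(4)] has_derivative_linear by blast
  have "((\<lambda>s. g (p + s *\<^sub>R c)) has_derivative (\<lambda>s. H p (s *\<^sub>R c))) (at 0)"
    using has_derivative_compose[OF 1 2] by (simp add: o_def)
  hence "((\<lambda>s. g (p + s *\<^sub>R c) \<bullet> b) has_derivative (\<lambda>s. H p (s *\<^sub>R c) \<bullet> b)) (at 0)"
    by (auto intro!: derivative_eq_intros)
  hence d: "((\<lambda>s. g (p + s *\<^sub>R c) \<bullet> b) has_field_derivative (H p c \<bullet> b)) (at 0)"
    by (rule has_derivative_imp_has_field_derivative) (simp add: linear_scale[OF lin])
  have "((\<lambda>s. pd b F (p + s *\<^sub>R c)) has_field_derivative (H p c \<bullet> b)) (at 0)"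
    apply (rule has_field_derivative_transform_within_open[OF d oT])
    using assms(4) apply simp
    using pd_first[OF assms(2)] by simp
  thus ?thesis unfolding pd_def[of c] by (rule DERIV_imp_deriv)
qed



lemma nfst_deriv:
  fixes q :: "('a::euclidean_space) \<times> real"
  assumes "fst q \<noteq> 0"
  shows "((\<lambda>q. norm (fst q)) has_derivative (\<lambda>h. fst h \<bullet> sgn (fst q))) (at q)"
proof -
  have "(norm has_derivative (\<lambda>h. h \<bullet> sgn (fst q))) (at (fst q))"
    using has_derivative_norm[OF assms] .
  from has_derivative_compose[OF has_derivative_fst[OF has_derivative_ident] this]
  show ?thesis by (simp add: o_def)
qed

lemma G_deriv:
  fixes q :: "('a::euclidean_space) \<times> real"
  assumes "fst q \<noteq> 0"
  shows "((\<lambda>q. (inverse (norm (fst q)) *\<^sub>R fst q, 0::real)) has_derivative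
     (\<lambda>h. (inverse (norm (fst q)) *\<^sub>R fst h - ((fst q \<bullet> fst h) / norm (fst q)^3) *\<^sub>R fst q, 0))) (at q)"
proof -
  have h1: "((\<lambda>q. inverse (norm (fst q))) has_derivative
     (\<lambda>h. - (inverse (norm (fst q)) * (fst h \<bullet> sgn (fst q)) * inverse (norm (fst q))))) (at q)"
    using assms by (intro Deriv.has_derivative_inverse nfst_deriv) auto
  have h2: "(fst has_derivative fst) (at q)" by (rule bounded_linear_imp_has_derivative[OF bounded_linear_fst])
  note h3 = has_derivative_Pair[OF has_derivative_scaleR[OF h1 h2] has_derivative_const[of 0]]
  show ?thesis
    apply (rule has_derivative_eq_rhs[OF h3])
    using assms by (auto simp: fun_eq_iff sgn_div_norm inner_commute field_simps power3_eq_cube)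
qed

lemma stab_formula:
  assumes "open S" "\<And>x. x \<in> S \<Longrightarrow> (cyl_ext u has_derivative (\<lambda>h. g x \<bullet> h)) (at x)"
    "\<And>x. x \<in> S \<Longrightarrow> (g has_derivative H x) (at x)" "p \<in> S"
  shows "stab_op u p = (\<Sum>b\<in>Basis. H p b \<bullet> b) - 1/2 * (p \<bullet> g p) + (cyl_A2 p + 1/2) * u p"
proof -
  have "cyl_grad u p = g p"
  proof -
    have "cyl_grad u p = (\<Sum>b\<in>Basis. (g p \<bullet> b) *\<^sub>R b)"
      unfolding cyl_grad_def eucl_grad_def using pd_first[OF assms(2) assms(4)]
      by (intro sum.cong) auto
    thus ?thesis by (simp add: euclidean_representation)
  qed
  moreover have "cyl_lap u p = (\<Sum>b\<in>Basis. H p b \<bullet> b)"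
    unfolding cyl_lap_def eucl_lap_def using pd_second[OF assms(1-4)] by simp
  ultimately show ?thesis unfolding stab_op_def by simp
qed

lemma r_pos: "CARD('n) \<ge> 2 \<Longrightarrow> shrink_radius CARD('n) > 0"
  unfolding shrink_radius_def by simp

lemma r_sq: "CARD('n) \<ge> 2 \<Longrightarrow> (shrink_radius CARD('n))^2 = 2 * (real CARD('n) - 1)"
  unfolding shrink_radius_def by simp

lemma A2_val:
  fixes p :: "(real^'n) \<times> real"
  assumes n2: "CARD('n) \<ge> 2" and pS: "p \<in> Sigma_cyl"
  shows "cyl_A2 p = 1/2"
proof -
  define r where "r = shrink_radius CARD('n)"
  have rp: "r > 0" using n2 unfolding r_def shrink_radius_def by simp
  have r2: "r^2 = 2 * (real CARD('n) - 1)" using n2 unfolding r_def shrink_radius_def by simp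
  define y where "y = fst p"
  have ny: "norm y = r" using pS unfolding Sigma_cyl_def y_def r_def by auto
  have y0: "y \<noteq> 0" using ny rp by auto
  define G where "G = (\<lambda>q::(real^'n) \<times> real. (inverse (norm (fst q)) *\<^sub>R fst q, 0::real))"
  define HH where "HH = (\<lambda>(q::(real^'n) \<times> real) (h::(real^'n) \<times> real).
     (inverse (norm (fst q)) *\<^sub>R fst h - ((fst q \<bullet> fst h) / norm (fst q)^3) *\<^sub>R fst q, 0::real))"
  let ?S = "{q::(real^'n) \<times> real. fst q \<noteq> 0}"
  have oS: "open ?S"
    by (rule open_Collect_neq) (auto intro: continuous_intros)
  have d1: "(cyl_sdist has_derivative (\<lambda>h. G x \<bullet> h)) (at x)" if "x \<in> ?S" for x
  proof -
    have "((\<lambda>q. norm (fst q) - shrink_radius CARD('n)) has_derivative (\<lambda>h. fst h \<bullet> sgn (fst x) - 0)) (at x)"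
      using that by (intro has_derivative_diff nfst_deriv has_derivative_const) auto
    moreover have "(cyl_sdist :: (real^'n) \<times> real \<Rightarrow> real) = (\<lambda>q. norm (fst q) - shrink_radius CARD('n))"
      by (auto simp: cyl_sdist_def fun_eq_iff)
    ultimately show ?thesis
      by (rule_tac has_derivative_eq_rhs) (auto simp: G_def fun_eq_iff sgn_div_norm inner_commute)
  qed
  have d2: "(G has_derivative HH x) (at x)" if "x \<in> ?S" for x
    unfolding G_def HH_def using G_deriv[of x] that by simp
  have pin: "p \<in> ?S" using y0 y_def by simp
  have "cyl_A2 p = (\<Sum>b\<in>Basis. \<Sum>c\<in>Basis. (HH p c \<bullet> b)^2)"
    unfolding cyl_A2_def using pd_second[OF oS d1 d2 pin] by simp
  also have "\<dots> = (\<Sum>c\<in>Basis. \<Sum>b\<in>Basis. (HH p c \<bullet> b) * (HH p c \<bullet> b))"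
    by (subst sum.swap) (simp add: power2_eq_square)
  also have "\<dots> = (\<Sum>c\<in>Basis. HH p c \<bullet> HH p c)"
    by (simp add: euclidean_inner[symmetric])
  also have "\<dots> = (\<Sum>i\<in>Basis. HH p (i,0) \<bullet> HH p (i,0)) + (\<Sum>i\<in>Basis. HH p (0,i) \<bullet> HH p (0,i))"
    by (rule sum_Basis_prod_real)
  also have "(\<Sum>i\<in>Basis. HH p (0,i) \<bullet> HH p (0,i)) = 0"
    by (simp add: HH_def)
  also have "(\<Sum>i\<in>Basis. HH p (i,0) \<bullet> HH p (i,0)) = (\<Sum>i\<in>(Basis::(real^'n) set). 1/r^2 - (y \<bullet> i)^2 / r^4)"
  proof (rule sum.cong[OF refl])
    fix i :: "real^'n" assume i: "i \<in> Basis"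
    have yy: "y \<bullet> y = r^2" using ny by (metis power2_norm_eq_inner)
    have ii: "i \<bullet> i = 1" using i by simp
    show "HH p (i,0) \<bullet> HH p (i,0) = 1/r^2 - (y \<bullet> i)^2 / r^4"
      unfolding HH_def y_def[symmetric] using rp
      by (simp add: ny inner_diff_left inner_diff_right yy ii inner_commute[of i y] power2_eq_square
           field_simps power3_eq_cube) (simp add: algebra_simps power2_eq_square power4_eq_xxxx power3_eq_cube)
  qed
  also have "\<dots> = real CARD('n) / r^2 - (y \<bullet> y) / r^4"
    by (simp add: sum_subtractf sum_divide_distrib[symmetric] euclidean_inner[of y y] power2_eq_square)
  also have "\<dots> = 1/2"
    using ny rp r2 by (simp add: power2_norm_eq_inner[symmetric] field_simps power4_eq_xxxx power2_eq_square)
  finally show ?thesis by simp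
qed



lemma cyl_ext_snd: "cyl_ext (\<lambda>q. f (snd q)) = (\<lambda>q. f (snd q))"
  by (auto simp: fun_eq_iff cyl_ext_def cyl_proj_def)

lemma phi_d1:
  fixes q :: "('a::euclidean_space) \<times> real"
  assumes "\<And>t. (f has_real_derivative f1 t) (at t)"
  shows "((\<lambda>q. f (snd q)) has_derivative (\<lambda>h. (0::'a, f1 (snd q)) \<bullet> h)) (at q)"
proof -
  have 1: "(snd has_derivative snd) (at q)" by (rule bounded_linear_imp_has_derivative[OF bounded_linear_snd])
  have 2: "(f has_derivative (*) (f1 (snd q))) (at (snd q))"
    using assms[of "snd q"] by (simp add: has_field_derivative_def)
  have 3: "((\<lambda>x. f (snd x)) has_derivative (\<lambda>x. f1 (snd q) * snd x)) (at q)"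
    using has_derivative_compose[OF 1 2] by (simp add: o_def)
  show ?thesis
    by (rule has_derivative_eq_rhs[OF 3]) (auto simp: fun_eq_iff inner_Pair_0)
qed

lemma phi_d2:
  fixes q :: "('a::euclidean_space) \<times> real"
  assumes "\<And>t. (f1 has_real_derivative f2 t) (at t)"
  shows "((\<lambda>q. (0::'a, f1 (snd q))) has_derivative (\<lambda>h. (0::'a, f2 (snd q) * snd h))) (at q)"
proof -
  have 1: "(snd has_derivative snd) (at q)" by (rule bounded_linear_imp_has_derivative[OF bounded_linear_snd])
  have 2: "(f1 has_derivative (*) (f2 (snd q))) (at (snd q))"
    using assms[of "snd q"] by (simp add: has_field_derivative_def)
  have "((\<lambda>q. f1 (snd q)) has_derivative (\<lambda>h. f2 (snd q) * snd h)) (at q)"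
    using has_derivative_compose[OF 1 2] by (simp add: o_def mult.commute)
  from has_derivative_Pair[OF has_derivative_const[of 0] this] show ?thesis by simp
qed

lemma sum_snd_sq:
  "(\<Sum>b\<in>(Basis :: (('a::euclidean_space) \<times> real) set). c * (snd b * snd b)) = c"
  by (subst sum_Basis_prod_real) simp

lemma phi_stab:
  fixes p :: "(real^'n) \<times> real"
  assumes n2: "CARD('n) \<ge> 2" and pS: "p \<in> Sigma_cyl"
    and d1: "\<And>t. (f has_real_derivative f1 t) (at t)"
    and d2: "\<And>t. (f1 has_real_derivative f2 t) (at t)"
  shows "stab_op (\<lambda>q. f (snd q)) p = f2 (snd p) - snd p * f1 (snd p) / 2 + f (snd p)"
proof -
  have "stab_op (\<lambda>q. f (snd q)) p = (\<Sum>b\<in>Basis. (0::real^'n, f2 (snd p) * snd b) \<bullet> b)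
      - 1/2 * (p \<bullet> (0::real^'n, f1 (snd p))) + (cyl_A2 p + 1/2) * f (snd p)"
    by (rule stab_formula[of UNIV]) (auto simp: cyl_ext_snd intro: phi_d1[OF d1] phi_d2[OF d2])
  also have "(\<Sum>b\<in>(Basis :: ((real^'n) \<times> real) set). (0::real^'n, f2 (snd p) * snd b) \<bullet> b) = f2 (snd p)"
  proof -
    have "(\<Sum>b\<in>(Basis :: ((real^'n) \<times> real) set). (0::real^'n, f2 (snd p) * snd b) \<bullet> b)
       = (\<Sum>b\<in>(Basis :: ((real^'n) \<times> real) set). f2 (snd p) * (snd b * snd b))"
      by (rule sum.cong[OF refl]) (case_tac x, simp)
    thus ?thesis using sum_snd_sq[of "f2 (snd p)", where 'a="real^'n"] by simp
  qed
  finally show ?thesis using A2_val[OF n2 pS]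
    by (cases p) (simp add: inner_Pair_0)
qed



lemma proj_in_Sigma:
  fixes q :: "(real^'n) \<times> real"
  assumes "fst q \<noteq> 0"
  shows "cyl_proj q \<in> Sigma_cyl" "snd (cyl_proj q) = snd q"
proof -
  have r0: "shrink_radius CARD('n) \<ge> 0" unfolding shrink_radius_def by simp
  show "cyl_proj q \<in> Sigma_cyl" using assms r0
    by (auto simp: cyl_proj_def Sigma_cyl_def)
  show "snd (cyl_proj q) = snd q" by (simp add: cyl_proj_def)
qed

lemma S_eq:
  "{q::(real^'n) \<times> real. fst q \<noteq> 0 \<and> cyl_proj q \<in> {p \<in> Sigma_cyl. snd p \<in> T}}
    = (-{0}) \<times> T"
  using proj_in_Sigma by (auto simp: cyl_proj_def)

lemma exist_stable:
  assumes n2: "CARD('n) \<ge> 2" and oT: "open T"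
    and d1: "\<And>t. (f has_real_derivative f1 t) (at t)"
    and d2: "\<And>t. (f1 has_real_derivative f2 t) (at t)"
    and c2: "continuous_on UNIV f2"
    and sol: "\<And>t. t \<in> T \<Longrightarrow> f2 t - t * f1 t / 2 + f t = 0 \<and> f t > 0"
  shows "stable_region {p \<in> (Sigma_cyl :: ((real^'n) \<times> real) set). snd p \<in> T}"
  unfolding stable_region_def
proof (intro exI conjI ballI)
  let ?u = "\<lambda>q::(real^'n) \<times> real. f (snd q)"
  show "C2_on {q. fst q \<noteq> 0 \<and> cyl_proj q \<in> {p \<in> Sigma_cyl. snd p \<in> T}} (cyl_ext ?u)"
    unfolding C2_on_def S_eq cyl_ext_snd
  proof (intro conjI exI ballI allI)
    show "open ((- {0::real^'n}) \<times> T)" using oT by (intro open_Times) auto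
    fix x :: "(real^'n) \<times> real"
    show "((\<lambda>q. f (snd q)) has_derivative (\<lambda>h. (0::real^'n, f1 (snd x)) \<bullet> h)) (at x)"
      by (rule phi_d1[OF d1])
    show "((\<lambda>q. (0::real^'n, f1 (snd q))) has_derivative (\<lambda>h. (0::real^'n, f2 (snd x) * snd h))) (at x)"
      by (rule phi_d2[OF d2])
  next
    fix h :: "(real^'n) \<times> real"
    have "continuous_on UNIV (\<lambda>x::(real^'n) \<times> real. f2 (snd x))"
      by (rule continuous_on_compose2[OF c2 continuous_on_snd]) (auto intro: continuous_intros)
    thus "continuous_on ((- {0}) \<times> T) (\<lambda>x::(real^'n) \<times> real. (0::real^'n, f2 (snd x) * snd h))"
      by (auto intro!: continuous_intros elim: continuous_on_subset)
  qed
  fix p assume p: "p \<in> {p \<in> (Sigma_cyl :: ((real^'n) \<times> real) set). snd p \<in> T}"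
  show "stab_op ?u p = 0" using phi_stab[OF n2 _ d1 d2, of p] sol[of "snd p"] p by simp
  show "?u p > 0" using sol p by simp
qed



lemma local_max_2nd:
  fixes F F' :: "real \<Rightarrow> real"
  assumes dp: "\<delta> > 0" and dF: "\<And>s. \<bar>s\<bar> < \<delta> \<Longrightarrow> (F has_real_derivative F' s) (at s)"
    and dF': "(F' has_real_derivative d) (at 0)"
    and mx: "\<And>s. \<bar>s\<bar> < \<delta> \<Longrightarrow> F s \<le> F 0"
  shows "F' 0 = 0 \<and> d \<le> 0"
proof
  show F0: "F' 0 = 0"
    by (rule DERIV_local_max[OF dF[of 0] dp]) (use dp mx in auto)
  show "d \<le> 0"
  proof (rule ccontr)
    assume "\<not> d \<le> 0" hence "d > 0" by simp
    from DERIV_pos_inc_right[OF dF' this] obtain e where e: "e > 0" "\<And>h. h > 0 \<Longrightarrow> h < e \<Longrightarrow> F' 0 < F' (0 + h)"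
      by blast
    define h where "h = min e \<delta> / 2"
    have h: "0 < h" "h < e" "h < \<delta>" using e dp by (auto simp: h_def)
    from MVT2[of 0 h F F'] obtain z where z: "0 < z" "z < h" "F h - F 0 = (h - 0) * F' z"
      using h dF by force
    have "F' z > 0" using e(2)[of z] z h F0 by simp
    hence "F h - F 0 > 0" using z h by simp
    moreover have "F h \<le> F 0" using mx[of h] h by simp
    ultimately show False by simp
  qed
qed

lemma line_deriv:
  fixes F :: "'a::euclidean_space \<Rightarrow> real"
  assumes "(F has_derivative (\<lambda>h. G (p + s *\<^sub>R b) \<bullet> h)) (at (p + s *\<^sub>R b))"
  shows "((\<lambda>s. F (p + s *\<^sub>R b)) has_real_derivative (G (p + s *\<^sub>R b) \<bullet> b)) (at s)"
proof -
  have 1: "((\<lambda>s. p + s *\<^sub>R b) has_derivative (\<lambda>s. s *\<^sub>R b)) (at s)"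
    by (auto intro!: derivative_eq_intros)
  have "((\<lambda>s. F (p + s *\<^sub>R b)) has_derivative (\<lambda>t. G (p + s *\<^sub>R b) \<bullet> (t *\<^sub>R b))) (at s)"
    using has_derivative_compose[OF 1 assms] by (simp add: o_def)
  thus ?thesis by (rule has_derivative_imp_has_field_derivative) simp
qed

lemma line_deriv2:
  fixes G :: "'a::euclidean_space \<Rightarrow> 'a"
  assumes "(G has_derivative HH) (at p)"
  shows "((\<lambda>s. G (p + s *\<^sub>R b) \<bullet> b) has_real_derivative (HH b \<bullet> b)) (at 0)"
proof -
  have 1: "((\<lambda>s. p + s *\<^sub>R b) has_derivative (\<lambda>s. s *\<^sub>R b)) (at 0)"
    by (auto intro!: derivative_eq_intros)
  have 2: "(G has_derivative HH) (at (p + 0 *\<^sub>R b))" using assms by simp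
  have lin: "linear HH" using assms has_derivative_linear by blast
  have "((\<lambda>s. G (p + s *\<^sub>R b)) has_derivative (\<lambda>s. HH (s *\<^sub>R b))) (at 0)"
    using has_derivative_compose[OF 1 2] by (simp add: o_def)
  hence "((\<lambda>s. G (p + s *\<^sub>R b) \<bullet> b) has_derivative (\<lambda>s. HH (s *\<^sub>R b) \<bullet> b)) (at 0)"
    by (auto intro!: derivative_eq_intros)
  thus ?thesis
    by (rule has_derivative_imp_has_field_derivative) (simp add: linear_scale[OF lin])
qed

lemma proj_id:
  fixes p :: "(real^'n) \<times> real"
  assumes n2: "CARD('n) \<ge> 2" and "p \<in> Sigma_cyl"
  shows "cyl_proj p = p"
  using assms r_pos[OF n2] by (auto simp: cyl_proj_def Sigma_cyl_def)



lemma no_stable: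
  fixes \<Omega> :: "((real^'n) \<times> real) set"
  assumes n2: "CARD('n) \<ge> 2" and OS: "\<Omega> \<subseteq> Sigma_cyl" and st: "stable_region \<Omega>"
    and d1: "\<And>t. (f has_real_derivative f1 t) (at t)"
    and d2: "\<And>t. (f1 has_real_derivative f2 t) (at t)"
    and Kin: "\<And>p. p \<in> Sigma_cyl \<Longrightarrow> \<alpha> \<le> snd p \<Longrightarrow> snd p \<le> \<beta> \<Longrightarrow> p \<in> \<Omega>"
    and fa: "f \<alpha> \<le> 0" and fb: "f \<beta> \<le> 0" and t1: "\<alpha> < t1" "t1 < \<beta>" "f t1 > 0"
    and Lpos: "\<And>t. \<alpha> < t \<Longrightarrow> t < \<beta> \<Longrightarrow> f t > 0 \<Longrightarrow> f2 t - t * f1 t / 2 + f t > 0"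
  shows False
proof -
  define r where "r = shrink_radius CARD('n)"
  have rp: "r > 0" using r_pos[OF n2] r_def by simp
  define S where "S = {q::(real^'n) \<times> real. fst q \<noteq> 0 \<and> cyl_proj q \<in> \<Omega>}"
  obtain u where C2: "C2_on S (cyl_ext u)" and sol: "\<And>p. p \<in> \<Omega> \<Longrightarrow> stab_op u p = 0 \<and> u p > 0"
    using st unfolding stable_region_def S_def by blast
  define U where "U = cyl_ext u"
  obtain g H where oS: "open S" and dU: "\<And>x. x \<in> S \<Longrightarrow> (U has_derivative (\<lambda>h. g x \<bullet> h)) (at x)"
    and dg: "\<And>x. x \<in> S \<Longrightarrow> (g has_derivative H x) (at x)"
    using C2 unfolding C2_on_def U_def by blast
  have pid: "cyl_proj p = p" if "p \<in> Sigma_cyl" for p :: "(real^'n) \<times> real" using proj_id[OF n2 that] .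
  have fst0: "fst p \<noteq> 0" if "p \<in> Sigma_cyl" for p :: "(real^'n) \<times> real"
    using that rp unfolding Sigma_cyl_def r_def by auto
  have OmS: "\<Omega> \<subseteq> S" using OS pid fst0 unfolding S_def by auto
  have Uu: "U p = u p" if "p \<in> Sigma_cyl" for p :: "(real^'n) \<times> real"
    using pid[OF that] unfolding U_def cyl_ext_def by simp
  define K where "K = {p \<in> (Sigma_cyl :: ((real^'n) \<times> real) set). \<alpha> \<le> snd p \<and> snd p \<le> \<beta>}"
  have KO: "K \<subseteq> \<Omega>" using Kin unfolding K_def by auto
  have Keq: "K = sphere 0 r \<times> {\<alpha>..\<beta>}"
    unfolding K_def Sigma_cyl_def r_def by auto
  have cK: "compact K" unfolding Keq by (intro compact_Times compact_sphere compact_Icc)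
  obtain y1 :: "real^'n" where y1: "norm y1 = r" using vector_choose_size rp by (metis less_imp_le)
  have p1K: "(y1, t1) \<in> K" using y1 t1 unfolding Keq by auto
  have contU: "continuous_on K U"
    by (rule continuous_at_imp_continuous_on) (use KO OmS dU has_derivative_continuous in blast)
  have contu: "continuous_on K u"
    using contU by (rule continuous_on_cong[THEN iffD1, rotated 2]) (auto simp: Uu K_def)
  have contf: "continuous_on UNIV f"
    using d1 by (intro continuous_at_imp_continuous_on) (auto intro: DERIV_isCont)
  have upos: "u p > 0" if "p \<in> K" for p using sol[of p] KO that by auto
  define w where "w = (\<lambda>p. f (snd p) / u p)"
  have un0: "\<forall>p\<in>K. u p \<noteq> 0" using upos by (metis order_less_irrefl)
  have cfs: "continuous_on K (\<lambda>p. f (snd p))"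
    by (rule continuous_on_compose2[OF contf continuous_on_snd]) (auto intro: continuous_intros)
  have contw: "continuous_on K w" unfolding w_def
    by (rule continuous_on_divide[OF cfs contu un0])
  obtain p0 where p0K: "p0 \<in> K" and p0max: "\<And>p. p \<in> K \<Longrightarrow> w p \<le> w p0"
    using continuous_attains_sup[OF cK _ contw] p1K by blast
  define m where "m = w p0"
  define t0 where "t0 = snd p0"
  have "w (y1, t1) > 0" using t1 upos[OF p1K] unfolding w_def by simp
  hence mpos: "m > 0" using p0max[OF p1K] m_def by simp
  have up0: "u p0 > 0" using upos p0K by simp
  have fm: "f t0 = m * u p0" using up0 unfolding m_def w_def t0_def by simp
  have ft0: "f t0 > 0" using fm mpos up0 by simp
  have p0S: "p0 \<in> Sigma_cyl" using p0K K_def by simp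
  have t0r: "\<alpha> < t0" "t0 < \<beta>"
    using p0K ft0 fa fb unfolding K_def t0_def by (auto simp: order.order_iff_strict)
  define N where "N = (-{0::real^'n}) \<times> {\<alpha><..<\<beta>}"
  have oN: "open N" unfolding N_def by (intro open_Times) auto
  have p0N: "p0 \<in> N" using fst0[OF p0S] t0r unfolding N_def t0_def by (cases p0) auto
  have projK: "cyl_proj q \<in> K" if "q \<in> N" for q
    using that proj_in_Sigma[of q] unfolding N_def K_def by auto
  have NS: "N \<subseteq> S" using projK KO unfolding S_def N_def by auto
  define W where "W = (\<lambda>q. f (snd q) - m * U q)"
  have Wle: "W q \<le> 0" if "q \<in> N" for q
  proof -
    define q' where "q' = cyl_proj q"
    have q'K: "q' \<in> K" using projK that q'_def by simp
    have "U q = u q'" unfolding U_def cyl_ext_def q'_def by simp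
    moreover have "snd q = snd q'" unfolding q'_def by (simp add: cyl_proj_def)
    moreover have "f (snd q') / u q' \<le> m" using p0max[OF q'K] unfolding w_def m_def .
    ultimately show ?thesis using upos[OF q'K] unfolding W_def by (simp add: divide_le_eq mult.commute)
  qed
  have W0: "W p0 = 0" unfolding W_def using fm Uu[OF p0S] t0_def by simp
  define gW where "gW = (\<lambda>x. (0::real^'n, f1 (snd x)) - m *\<^sub>R g x)"
  define HW where "HW = (\<lambda>x h. (0::real^'n, f2 (snd x) * snd h) - m *\<^sub>R H x h)"
  have dW: "(W has_derivative (\<lambda>h. gW x \<bullet> h)) (at x)" if "x \<in> N" for x
  proof -
    have "(W has_derivative (\<lambda>h. (0::real^'n, f1 (snd x)) \<bullet> h - m * (g x \<bullet> h))) (at x)"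
      unfolding W_def using that NS
      by (intro has_derivative_diff phi_d1[OF d1] has_derivative_mult_right dU) auto
    thus ?thesis by (rule has_derivative_eq_rhs) (auto simp: gW_def fun_eq_iff inner_diff_left)
  qed
  have dgW: "(gW has_derivative HW x) (at x)" if "x \<in> N" for x
    unfolding gW_def HW_def using that NS
    by (intro has_derivative_diff phi_d2[OF d2] has_derivative_scaleR_right dg) auto
  obtain e where e: "e > 0" "ball p0 e \<subseteq> N" using oN p0N open_contains_ball by blast
  have bres: "gW p0 \<bullet> b = 0 \<and> HW p0 b \<bullet> b \<le> 0" if b: "b \<in> Basis" for b
  proof -
    have nb: "norm b = 1" using b by simp
    have inN: "p0 + s *\<^sub>R b \<in> N" if "\<bar>s\<bar> < e" for s
      using e that nb by (auto simp: dist_norm intro!: subsetD[OF e(2)])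
    have D1: "((\<lambda>s. W (p0 + s *\<^sub>R b)) has_real_derivative (gW (p0 + s *\<^sub>R b) \<bullet> b)) (at s)"
      if "\<bar>s\<bar> < e" for s
      using line_deriv[of W gW p0 s b] dW[OF inN[OF that]] by simp
    have D2: "((\<lambda>s. gW (p0 + s *\<^sub>R b) \<bullet> b) has_real_derivative (HW p0 b \<bullet> b)) (at 0)"
      using line_deriv2[of gW "HW p0" p0 b] dgW[OF p0N] by simp
    have r: "gW p0 \<bullet> b = 0 \<and> HW p0 b \<bullet> b \<le> 0"
      using local_max_2nd[of e "\<lambda>s. W (p0 + s *\<^sub>R b)" "\<lambda>s. gW (p0 + s *\<^sub>R b) \<bullet> b" "HW p0 b \<bullet> b"]
      using e(1) D1 D2 Wle[OF inN] W0 by auto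
    thus ?thesis .
  qed
  have gW0: "gW p0 = 0" using bres euclidean_all_zero_iff by blast
  have sumH: "(\<Sum>b\<in>Basis. HW p0 b \<bullet> b) \<le> 0" using bres by (intro sum_nonpos) auto
  have E1: "stab_op (\<lambda>q. f (snd q)) p0 = (\<Sum>b\<in>Basis. (0::real^'n, f2 (snd p0) * snd b) \<bullet> b)
      - 1/2 * (p0 \<bullet> (0::real^'n, f1 (snd p0))) + (cyl_A2 p0 + 1/2) * f (snd p0)"
    by (rule stab_formula[of UNIV]) (auto simp: cyl_ext_snd intro: phi_d1[OF d1] phi_d2[OF d2])
  have E2: "stab_op u p0 = (\<Sum>b\<in>Basis. H p0 b \<bullet> b) - 1/2 * (p0 \<bullet> g p0) + (cyl_A2 p0 + 1/2) * u p0"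
    by (rule stab_formula[OF oS dU[unfolded U_def] dg]) (use p0K KO OmS in auto)
  have E3: "stab_op (\<lambda>q. f (snd q)) p0 > 0"
    using phi_stab[OF n2 p0S d1 d2] Lpos[OF t0r ft0] t0_def by simp
  have E4: "stab_op u p0 = 0" using sol[of p0] p0K KO by auto
  have sumHW: "(\<Sum>b\<in>Basis. HW p0 b \<bullet> b) = (\<Sum>b\<in>Basis. (0::real^'n, f2 (snd p0) * snd b) \<bullet> b)
      - m * (\<Sum>b\<in>Basis. H p0 b \<bullet> b)"
    unfolding HW_def by (simp add: inner_diff_left sum_subtractf sum_distrib_left)
  have gg: "p0 \<bullet> (0::real^'n, f1 (snd p0)) = m * (p0 \<bullet> g p0)"
    using gW0 unfolding gW_def by (simp add: inner_diff_right)
  have "stab_op (\<lambda>q. f (snd q)) p0 - m * stab_op u p0 = (\<Sum>b\<in>Basis. HW p0 b \<bullet> b)"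
    unfolding E1 E2 sumHW gg using fm t0_def by (simp add: algebra_simps)
  thus False using E3 E4 sumH by simp
qed



lemma sq_gt: "sqrt 2 < \<bar>t\<bar> \<Longrightarrow> 2 < (t::real)^2"
  by (metis abs_ge_zero power2_abs real_sqrt_abs real_sqrt_less_iff real_sqrt_pow2_iff sqrt_le_D order.strict_trans1 order.strict_implies_order less_le_not_le linorder_not_le real_less_rsqrt)

lemma sq_lt: "\<bar>t\<bar> < sqrt 2 \<Longrightarrow> (t::real)^2 < 2"
  by (metis abs_ge_zero power2_abs real_sqrt_abs real_sqrt_less_iff)

lemma exist_part:
  assumes n2: "CARD('n) \<ge> 2"
  shows "stable_region {p \<in> (Sigma_cyl :: ((real^'n) \<times> real) set). snd p > sqrt 2} \<and>
     stable_region {p \<in> (Sigma_cyl :: ((real^'n) \<times> real) set). \<bar>snd p\<bar> < sqrt 2} \<and>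
     stable_region {p \<in> (Sigma_cyl :: ((real^'n) \<times> real) set). snd p < - sqrt 2}"
proof (intro conjI)
  have da: "\<And>t. ((\<lambda>t. t^2 - 2) has_real_derivative 2 * t) (at t)"
    by (auto intro!: derivative_eq_intros)
  have db: "\<And>t. ((\<lambda>t. 2 * t) has_real_derivative (\<lambda>t. 2) t) (at t)"
    by (auto intro!: derivative_eq_intros)
  have dc: "\<And>t. ((\<lambda>t. 2 - t^2) has_real_derivative - 2 * t) (at t)"
    by (auto intro!: derivative_eq_intros)
  have dd: "\<And>t. ((\<lambda>t. - 2 * t) has_real_derivative (\<lambda>t. - 2) t) (at t)"
    by (auto intro!: derivative_eq_intros)
  have "stable_region {p \<in> (Sigma_cyl :: ((real^'n) \<times> real) set). snd p \<in> {sqrt 2<..}}"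
    using sq_gt by (intro exist_stable[OF n2 _ da db]) (auto simp: power2_eq_square)
  thus "stable_region {p \<in> (Sigma_cyl :: ((real^'n) \<times> real) set). snd p > sqrt 2}" by simp
  have "stable_region {p \<in> (Sigma_cyl :: ((real^'n) \<times> real) set). snd p \<in> {t. \<bar>t\<bar> < sqrt 2}}"
  proof (intro exist_stable[OF n2 _ dc dd])
    show "open {t::real. \<bar>t\<bar> < sqrt 2}" by (intro open_Collect_less) (auto intro: continuous_intros)
  qed (use sq_lt in \<open>auto simp: power2_eq_square\<close>)
  thus "stable_region {p \<in> (Sigma_cyl :: ((real^'n) \<times> real) set). \<bar>snd p\<bar> < sqrt 2}" by simp
  have "stable_region {p \<in> (Sigma_cyl :: ((real^'n) \<times> real) set). snd p \<in> {..<- sqrt 2}}"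
    using sq_gt by (intro exist_stable[OF n2 _ da db]) (auto simp: power2_eq_square)
  thus "stable_region {p \<in> (Sigma_cyl :: ((real^'n) \<times> real) set). snd p < - sqrt 2}" by simp
qed

lemma mid_unstable:
  assumes n2: "CARD('n) \<ge> 2" and C: "C > sqrt 2"
  shows "\<not> stable_region {p \<in> (Sigma_cyl :: ((real^'n) \<times> real) set). \<bar>snd p\<bar> < C}"
proof
  assume st: "stable_region {p \<in> (Sigma_cyl :: ((real^'n) \<times> real) set). \<bar>snd p\<bar> < C}"
  define a where "a = (sqrt 2 + C) / 2"
  have a: "sqrt 2 < a" "a < C" using C unfolding a_def by auto
  have a2: "a^2 > 2" using sq_gt[of a] a by simp
  have ap: "a > 0" using a by (smt (verit) real_sqrt_ge_zero)
  have d1: "\<And>t. ((\<lambda>t. a^2 - t^2) has_real_derivative - 2 * t) (at t)"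
    by (auto intro!: derivative_eq_intros)
  have d2: "\<And>t. ((\<lambda>t. - 2 * t) has_real_derivative (\<lambda>t. - 2) t) (at t)"
    by (auto intro!: derivative_eq_intros)
  show False
    apply (rule no_stable[OF n2 _ st d1 d2, of "-a" a 0])
    using a ap a2 by (auto simp: power2_eq_square)
qed

lemma out_unstable:
  assumes n2: "CARD('n) \<ge> 2" and C: "C < sqrt 2" "C > 0"
  shows "\<not> stable_region {p \<in> (Sigma_cyl :: ((real^'n) \<times> real) set). snd p > C}"
proof
  assume st: "stable_region {p \<in> (Sigma_cyl :: ((real^'n) \<times> real) set). snd p > C}"
  have C2: "C^2 < 2" using sq_lt[of C] C by simp
  define b where "b = (C^2 + 2) / 2"
  have b0: "C^2 < b" "b < 2" using C2 unfolding b_def by auto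
  have b3: "b > 0" using zero_le_power2[of C] unfolding b_def by (smt (verit) half_gt_zero)
  note b = b0 b3
  define \<delta> where "\<delta> = (2 - b) / 100"
  have \<delta>: "\<delta> > 0" "\<delta> < 1/50" using b unfolding \<delta>_def by auto
  have d1: "\<And>t. ((\<lambda>t. t^2 - b - \<delta> * (t^2)^2) has_real_derivative (2 * t - 4 * \<delta> * t^3)) (at t)"
    by (auto intro!: derivative_eq_intros simp: power2_eq_square power3_eq_cube algebra_simps)
  have d2: "\<And>t. ((\<lambda>t. 2 * t - 4 * \<delta> * t^3) has_real_derivative (\<lambda>t. 2 - 12 * \<delta> * t^2) t) (at t)"
    by (auto intro!: derivative_eq_intros simp: power2_eq_square power3_eq_cube algebra_simps)
  have sb: "sqrt b ^ 2 = b" using b by simp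
  have sd: "sqrt (1/\<delta>) ^ 2 = 1/\<delta>" using \<delta> by simp
  have s2b: "sqrt (2*b) ^ 2 = 2*b" using b by simp
  have Cb: "C < sqrt b" using b C by (metis real_less_rsqrt)
  have lt1: "sqrt b < sqrt (2*b)" using b by simp
  have lt2: "sqrt (2*b) < sqrt (1/\<delta>)"
  proof -
    have h1: "\<delta> * b < \<delta> * 2" using b \<delta> by simp
    have h2: "\<delta> * (b * 2) = 2 * (\<delta> * b)" by simp
    have h3: "\<delta> * (b * 2) < 1" using h1 h2 \<delta> by linarith
    hence "2 * b < 1/\<delta>" using \<delta> by (simp add: field_simps)
    thus ?thesis by simp
  qed
  have key: "\<And>t. 2 - 12 * \<delta> * t^2 - t * (2 * t - 4 * \<delta> * t^3) / 2 + (t^2 - b - \<delta> * (t^2)^2)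
     = 64 * \<delta> + \<delta> * (t^2 - 6)^2"
  proof -
    fix t :: real
    have hb: "b = 2 - 100 * \<delta>" unfolding \<delta>_def by (simp add: field_simps)
    show "2 - 12 * \<delta> * t^2 - t * (2 * t - 4 * \<delta> * t^3) / 2 + (t^2 - b - \<delta> * (t^2)^2)
     = 64 * \<delta> + \<delta> * (t^2 - 6)^2"
      unfolding hb by (simp add: power2_eq_square power3_eq_cube field_simps)
  qed
  have f1: "(sqrt (1/\<delta>))^2 - b - \<delta> * ((sqrt (1/\<delta>))^2)^2 \<le> 0"
  proof -
    have "\<delta> * (1/\<delta>)^2 = 1/\<delta>" using \<delta> by (simp add: power2_eq_square)
    thus ?thesis unfolding sd using b by simp
  qed
  have f2: "(sqrt b)^2 - b - \<delta> * ((sqrt b)^2)^2 \<le> 0"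
    unfolding sb using \<delta> b by simp
  have f3: "0 < (sqrt (2*b))^2 - b - \<delta> * ((sqrt (2*b))^2)^2"
  proof -
    have "\<delta> * b < 1/50 * 2" using \<delta> b mult_strict_mono[of \<delta> "1/50" b 2] by simp
    hence "\<delta> * (2*b)^2 < b" using b by (simp add: power2_eq_square field_simps)
    thus ?thesis unfolding s2b by simp
  qed
  have Lp: "\<And>t. 0 < 2 - 12 * \<delta> * t^2 - t * (2 * t - 4 * \<delta> * t^3) / 2 + (t^2 - b - \<delta> * (t^2)^2)"
    unfolding key using \<delta> by (simp add: add_pos_nonneg)
  have Kin: "p \<in> {p \<in> (Sigma_cyl :: ((real^'n) \<times> real) set). snd p > C}"
    if "p \<in> Sigma_cyl" "sqrt b \<le> snd p" for p :: "(real^'n) \<times> real"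
    using that Cb by simp
  show False
    apply (rule no_stable[OF n2 _ st d1 d2, of "sqrt b" "sqrt (1/\<delta>)" "sqrt (2*b)"])
    subgoal by blast
    subgoal using Kin by blast
    subgoal by (rule f2)
    subgoal by (rule f1)
    subgoal by (rule lt1)
    subgoal by (rule lt2)
    subgoal by (rule f3)
    subgoal by (rule Lp)
    done
qed

theorem corollary4p10:
  assumes "CARD('n) \<ge> 2"
  shows "\<forall>C>0.
    (stable_region {p \<in> (Sigma_cyl :: ((real^'n) \<times> real) set). snd p > C} \<and>
     stable_region {p \<in> (Sigma_cyl :: ((real^'n) \<times> real) set). \<bar>snd p\<bar> < C} \<and>
     stable_region {p \<in> (Sigma_cyl :: ((real^'n) \<times> real) set). snd p < - C})
    \<longleftrightarrow> C = sqrt 2"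
proof (intro allI impI iffI)
  fix C :: real assume "C > 0"
  assume h: "stable_region {p \<in> (Sigma_cyl :: ((real^'n) \<times> real) set). snd p > C} \<and>
     stable_region {p \<in> (Sigma_cyl :: ((real^'n) \<times> real) set). \<bar>snd p\<bar> < C} \<and>
     stable_region {p \<in> (Sigma_cyl :: ((real^'n) \<times> real) set). snd p < - C}"
  show "C = sqrt 2"
  proof (rule ccontr)
    assume "C \<noteq> sqrt 2"
    hence "C < sqrt 2 \<or> C > sqrt 2" by auto
    thus False using h mid_unstable[OF assms] out_unstable[OF assms] \<open>C > 0\<close> by blast
  qed
next
  fix C :: real assume "C = sqrt 2"
  thus "stable_region {p \<in> (Sigma_cyl :: ((real^'n) \<times> real) set). snd p > C} \<and>
     stable_region {p \<in> (Sigma_cyl :: ((real^'n) \<times> real) set). \<bar>snd p\<bar> < C} \<and>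
     stable_region {p \<in> (Sigma_cyl :: ((real^'n) \<times> real) set). snd p < - C}"
    using exist_part[OF assms] by simp
qed

end
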